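(* Suppose the loss has the form $\ell(z,\theta)=q(\theta)\cdot\phi(z)$ for functions $q:\Theta\to\mathbb{R}^k$ and $\phi:\mathcal{Z}\to\mathbb{R}^k$. Suppose further that there exist constants $n_0$ and $\phi_0\in\mathbb{R}^k$ such that, for any training set $Z=\{z_1,\dots,z_n\}$ with $Z\sim\mathcal{D}^n$ and $\mathcal{D}\sim\mathcal{D}_1$, \[ \mathbb{E}_{\mathcal{D}\sim\mathcal{D}_1}\big[\mathbb{E}_{z\sim\mathcal{D}}[\phi(z)]\,\big|\,Z\big]=\frac{\phi_0+\sum_{i=1}^n\phi(z_i)}{n+n_0}. \] Then $R^*(\theta)=\frac1n q(\theta)\cdot\phi_0$ is a perfect, Bayes-optimal regularizer.
   Context: The data distribution $\mathcal{D}$ over examples $z\in\mathcal{Z}$ is itself drawn from a prior $\mathcal{D}_1$ over distributions. The training loss is $\hat L(\theta)=\frac1n\sum_{i=1}^n\ell(z_i,\theta)$, and $L(\theta,\mathcal{D})=\mathbb{E}_{z\sim\mathcal{D}}[\ell(z,\theta)]$. The conditional expected test loss is $\bar L(\theta,Z)=\mathbb{E}_{\mathcal{D}\sim\mathcal{D}_1}[L(\theta,\mathcal{D})\mid Z]$. A regularizer $R^*$ is Bayes-optimal if $\arg\min_{\theta\in\Theta}\{\hat L(\theta)+R^*(\theta)\}=\arg\min_{\theta\in\Theta}\{\bar L(\theta,Z)\}$. It is perfect if, in addition, $\hat L(\theta)+R^*(\theta)=h(\bar L(\theta,Z))$ for all $\theta\in\Theta$, for some monotone function $h$. *)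

theory Defs
  imports "HOL-Probability.Probability"
begin

definition train_loss :: "('z \<Rightarrow> 'p \<Rightarrow> real) \<Rightarrow> 'z list \<Rightarrow> 'p \<Rightarrow> real" where
  "train_loss l Z \<theta> = (\<Sum>z\<leftarrow>Z. l z \<theta>) / real (length Z)"

definition test_loss :: "('z \<Rightarrow> 'p \<Rightarrow> real) \<Rightarrow> ('d \<Rightarrow> 'z measure) \<Rightarrow> 'p \<Rightarrow> 'd \<Rightarrow> real" where
  "test_loss l Dist \<theta> d = (\<integral>z. l z \<theta> \<partial>Dist d)"

text \<open>Conditional expected test loss bar L(theta, Z) = E_{D ~ D_1}[L(theta,D) | Z],
  i.e. the expectation of L(theta, D) under the posterior Post Z of D given Z.\<close>
definition cond_test_loss ::
  "('z \<Rightarrow> 'p \<Rightarrow> real) \<Rightarrow> ('d \<Rightarrow> 'z measure) \<Rightarrow> ('z list \<Rightarrow> 'd measure) \<Rightarrow> 'p \<Rightarrow> 'z list \<Rightarrow> real" where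
  "cond_test_loss l Dist Post \<theta> Z = (\<integral>d. test_loss l Dist \<theta> d \<partial>Post Z)"

definition argmin_on :: "'p set \<Rightarrow> ('p \<Rightarrow> real) \<Rightarrow> 'p set" where
  "argmin_on \<Theta> f = {\<theta> \<in> \<Theta>. \<forall>\<theta>'\<in>\<Theta>. f \<theta> \<le> f \<theta>'}"

definition bayes_optimal ::
  "('z \<Rightarrow> 'p \<Rightarrow> real) \<Rightarrow> ('d \<Rightarrow> 'z measure) \<Rightarrow> ('z list \<Rightarrow> 'd measure) \<Rightarrow> 'p set \<Rightarrow> 'z list
   \<Rightarrow> ('p \<Rightarrow> real) \<Rightarrow> bool" where
  "bayes_optimal l Dist Post \<Theta> Z R \<longleftrightarrow>
     argmin_on \<Theta> (\<lambda>\<theta>. train_loss l Z \<theta> + R \<theta>) = argmin_on \<Theta> (\<lambda>\<theta>. cond_test_loss l Dist Post \<theta> Z)"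

definition perfect_reg ::
  "('z \<Rightarrow> 'p \<Rightarrow> real) \<Rightarrow> ('d \<Rightarrow> 'z measure) \<Rightarrow> ('z list \<Rightarrow> 'd measure) \<Rightarrow> 'p set \<Rightarrow> 'z list
   \<Rightarrow> ('p \<Rightarrow> real) \<Rightarrow> bool" where
  "perfect_reg l Dist Post \<Theta> Z R \<longleftrightarrow>
     bayes_optimal l Dist Post \<Theta> Z R \<and>
     (\<exists>h :: real \<Rightarrow> real. mono h \<and>
        (\<forall>\<theta>\<in>\<Theta>. train_loss l Z \<theta> + R \<theta> = h (cond_test_loss l Dist Post \<theta> Z)))"

end

theory Submission
  imports Defs
begin

lemma sum_list_inner: "(\<Sum>z\<leftarrow>Z. (c::'a::real_inner) \<bullet> f z) = c \<bullet> (\<Sum>z\<leftarrow>Z. f z)"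
  by (induction Z) (auto simp: inner_add_right)

theorem lemma1:
  fixes q :: "'p \<Rightarrow> real ^ 'k" and \<phi> :: "'z \<Rightarrow> real ^ 'k"
    and l :: "'z \<Rightarrow> 'p \<Rightarrow> real" and \<Theta> :: "'p set"
    and Dist :: "'d \<Rightarrow> 'z measure" and Post :: "'z list \<Rightarrow> 'd measure"
    and n0 :: real and \<phi>0 :: "real ^ 'k" and Z :: "'z list"
  assumes loss: "\<And>z \<theta>. l z \<theta> = q \<theta> \<bullet> \<phi> z"
    and dist_prob: "\<And>d. prob_space (Dist d)"
    and post_prob: "\<And>Z. prob_space (Post Z)"
    and phi_int: "\<And>d. integrable (Dist d) \<phi>"
    and mean_int: "\<And>Z. integrable (Post Z) (\<lambda>d. \<integral>z. \<phi> z \<partial>Dist d)"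
    and n0_nonneg: "0 \<le> n0"
    and post_mean: "\<And>Z. Z \<noteq> [] \<Longrightarrow>
        (\<integral>d. (\<integral>z. \<phi> z \<partial>Dist d) \<partial>Post Z)
          = (1 / (real (length Z) + n0)) *\<^sub>R (\<phi>0 + (\<Sum>z\<leftarrow>Z. \<phi> z))"
    and Z_ne: "Z \<noteq> []"
  shows "perfect_reg l Dist Post \<Theta> Z (\<lambda>\<theta>. (1 / real (length Z)) * (q \<theta> \<bullet> \<phi>0))"
proof -
  define n where "n = real (length Z)"
  define S where "S = (\<Sum>z\<leftarrow>Z. \<phi> z)"
  have npos: "n > 0" using Z_ne by (simp add: n_def)
  have cond: "cond_test_loss l Dist Post \<theta> Z = (q \<theta> \<bullet> \<phi>0 + q \<theta> \<bullet> S) / (n + n0)" for \<theta>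
  proof -
    have "cond_test_loss l Dist Post \<theta> Z = (\<integral>d. q \<theta> \<bullet> (\<integral>z. \<phi> z \<partial>Dist d) \<partial>Post Z)"
      unfolding cond_test_loss_def test_loss_def loss using phi_int by simp
    also have "\<dots> = q \<theta> \<bullet> (\<integral>d. (\<integral>z. \<phi> z \<partial>Dist d) \<partial>Post Z)"
      using mean_int by simp
    also have "\<dots> = (q \<theta> \<bullet> \<phi>0 + q \<theta> \<bullet> S) / (n + n0)"
      using post_mean[OF Z_ne] by (simp add: S_def n_def inner_add_right)
    finally show ?thesis .
  qed
  define h where "h = (\<lambda>x::real. ((n + n0) / n) * x)"
  have hpos: "(n + n0) / n > 0" using npos n0_nonneg by simp
  have eq: "train_loss l Z \<theta> + (1 / real (length Z)) * (q \<theta> \<bullet> \<phi>0)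
      = h (cond_test_loss l Dist Post \<theta> Z)" for \<theta>
  proof -
    have "train_loss l Z \<theta> = q \<theta> \<bullet> S / n"
      unfolding train_loss_def loss S_def n_def by (simp add: sum_list_inner)
    moreover have "n + n0 \<noteq> 0" using npos n0_nonneg by linarith
    moreover have key: "((n + n0) / n) * ((a + b) / (n + n0)) = b / n + a / n" if "n + n0 \<noteq> 0" for a b
    proof -
      have "n0 * n + n * n \<noteq> 0" using that npos
        by (metis distrib_right mult_eq_0_iff add.commute less_irrefl)
      then show ?thesis using that npos by (simp add: field_simps)
    qed
    ultimately have "train_loss l Z \<theta> + (1 / real (length Z)) * (q \<theta> \<bullet> \<phi>0)
        = q \<theta> \<bullet> S / n + q \<theta> \<bullet> \<phi>0 / n" by (simp add: n_def)
    also have "\<dots> = ((n + n0) / n) * ((q \<theta> \<bullet> \<phi>0 + q \<theta> \<bullet> S) / (n + n0))"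
      by (rule key[symmetric]) (use \<open>n + n0 \<noteq> 0\<close> in simp)
    finally show ?thesis unfolding cond h_def .
  qed
  have hle: "h x \<le> h y \<longleftrightarrow> x \<le> y" for x y
    unfolding h_def using hpos by (simp only: mult_le_cancel_left_pos)
  have mono: "mono h" using hle by (intro monoI) simp
  have "bayes_optimal l Dist Post \<Theta> Z (\<lambda>\<theta>. (1 / real (length Z)) * (q \<theta> \<bullet> \<phi>0))"
    unfolding bayes_optimal_def argmin_on_def eq hle by simp
  then show ?thesis unfolding perfect_reg_def using mono eq by blast
qed

end
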